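(* Let $\mathbf P=(P,\leq,{}',0,1)$ be an orthocomplete atomic orthomodular poset. The following are equivalent: (i) $\mathbf P$ is pseudo-orthomodular; (ii) $\mathbf P$ is a complete orthomodular lattice; (iii) the Dedekind-MacNeille completion $\mathrm{DM}(\mathbf P)$ is orthomodular.
   Context: For $M\subseteq P$, $U(M)$, $L(M)$ are the sets of upper and lower bounds; $U(a,b)=U(\{a,b\})$ etc. A poset with complementation is a bounded poset with antitone involution $'$ ($x\le y\Rightarrow y'\le x'$, $x''=x$) with $L(x,x')=\{0\}$, $U(x,x')=\{1\}$. It is orthomodular if for all $x\le y'$ the join $x\vee y$ exists, and $((x\vee y)\wedge y')\vee y= x\vee y$ whenever the expressions are defined (with $x\wedge y=(x'\vee y')'$). It is pseudo-orthomodular if $L(U(L(x,y),y'),y)=L(x,y)$ for all $x,y$. A subset $S$ is orthogonal if $s\le t'$ for all distinct $s,t\in S$; $\mathbf P$ is orthocomplete if every orthogonal subset has a join in $\mathbf P$. An atom is a minimal element of $P\setminus\{0\}$; $\mathbf P$ is atomic if every $b>0$ lies above some atom. The Dedekind-MacNeille completion $\mathrm{DM}(\mathbf P)$ is the complete lattice of subsets $B$ with $L(U(B))=B$ under inclusion, with involution $X'=L(\{u'\mid u\in X\})$; a lattice with complementation is orthomodular if $x\vee y=((x\vee y)\wedge y')\vee y$. *)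

theory Defs
  imports Main
begin

text \<open>Posets are modelled by a type of class order (the whole type is the poset P).
 The complementation is a function cmp, the bounds are bot0 and top1.\<close>

definition UB :: "'a::order set \<Rightarrow> 'a set" where
  "UB M = {u. \<forall>x\<in>M. x \<le> u}"

definition LB :: "'a::order set \<Rightarrow> 'a set" where
  "LB M = {l. \<forall>x\<in>M. l \<le> x}"

definition is_lub_in :: "'b set \<Rightarrow> ('b \<Rightarrow> 'b \<Rightarrow> bool) \<Rightarrow> 'b set \<Rightarrow> 'b \<Rightarrow> bool" where
  "is_lub_in D le M j \<longleftrightarrow> j \<in> D \<and> (\<forall>x\<in>M. le x j) \<and>
     (\<forall>u\<in>D. (\<forall>x\<in>M. le x u) \<longrightarrow> le j u)"

definition is_glb_in :: "'b set \<Rightarrow> ('b \<Rightarrow> 'b \<Rightarrow> bool) \<Rightarrow> 'b set \<Rightarrow> 'b \<Rightarrow> bool" where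
  "is_glb_in D le M m \<longleftrightarrow> m \<in> D \<and> (\<forall>x\<in>M. le m x) \<and>
     (\<forall>l\<in>D. (\<forall>x\<in>M. le l x) \<longrightarrow> le l m)"

definition poset_with_complementation :: "('a::order \<Rightarrow> 'a) \<Rightarrow> 'a \<Rightarrow> 'a \<Rightarrow> bool" where
  "poset_with_complementation cmp bot0 top1 \<longleftrightarrow>
     (\<forall>x. bot0 \<le> x \<and> x \<le> top1) \<and>
     (\<forall>x y. x \<le> y \<longrightarrow> cmp y \<le> cmp x) \<and>
     (\<forall>x. cmp (cmp x) = x) \<and>
     (\<forall>x. LB {x, cmp x} = {bot0}) \<and>
     (\<forall>x. UB {x, cmp x} = {top1})"

definition is_join :: "'a::order \<Rightarrow> 'a \<Rightarrow> 'a \<Rightarrow> bool" where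
  "is_join x y j \<longleftrightarrow> is_lub_in UNIV (\<le>) {x, y} j"

definition is_meet_c :: "('a::order \<Rightarrow> 'a) \<Rightarrow> 'a \<Rightarrow> 'a \<Rightarrow> 'a \<Rightarrow> bool" where
  "is_meet_c cmp x y m \<longleftrightarrow> is_join (cmp x) (cmp y) (cmp m)"

definition orthomodular_poset :: "('a::order \<Rightarrow> 'a) \<Rightarrow> 'a \<Rightarrow> 'a \<Rightarrow> bool" where
  "orthomodular_poset cmp bot0 top1 \<longleftrightarrow>
     poset_with_complementation cmp bot0 top1 \<and>
     (\<forall>x y. x \<le> cmp y \<longrightarrow> (\<exists>j. is_join x y j)) \<and>
     (\<forall>x y j m k. x \<le> cmp y \<longrightarrow> is_join x y j \<longrightarrow> is_meet_c cmp j (cmp y) m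
        \<longrightarrow> is_join m y k \<longrightarrow> k = j)"

definition pseudo_orthomodular :: "('a::order \<Rightarrow> 'a) \<Rightarrow> bool" where
  "pseudo_orthomodular cmp \<longleftrightarrow>
     (\<forall>x y. LB (UB (LB {x, y} \<union> {cmp y}) \<union> {y}) = LB {x, y})"

definition orthogonal_set :: "('a::order \<Rightarrow> 'a) \<Rightarrow> 'a set \<Rightarrow> bool" where
  "orthogonal_set cmp S \<longleftrightarrow> (\<forall>s\<in>S. \<forall>t\<in>S. s \<noteq> t \<longrightarrow> s \<le> cmp t)"

definition orthocomplete :: "('a::order \<Rightarrow> 'a) \<Rightarrow> bool" where
  "orthocomplete cmp \<longleftrightarrow>
     (\<forall>S. orthogonal_set cmp S \<longrightarrow> (\<exists>j. is_lub_in UNIV (\<le>) S j))"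

definition is_atom :: "'a::order \<Rightarrow> 'a \<Rightarrow> bool" where
  "is_atom bot0 a \<longleftrightarrow> a \<noteq> bot0 \<and> (\<forall>b. b \<noteq> bot0 \<and> b \<le> a \<longrightarrow> b = a)"

definition atomic :: "'a::order \<Rightarrow> bool" where
  "atomic bot0 \<longleftrightarrow> (\<forall>b. bot0 < b \<longrightarrow> (\<exists>a. is_atom bot0 a \<and> a \<le> b))"

definition orthomodular_lattice_on :: "'b set \<Rightarrow> ('b \<Rightarrow> 'b \<Rightarrow> bool) \<Rightarrow> ('b \<Rightarrow> 'b) \<Rightarrow> bool" where
  "orthomodular_lattice_on D le cmp \<longleftrightarrow>
     (\<forall>x\<in>D. \<forall>y\<in>D. \<forall>j m k. is_lub_in D le {x, y} j \<longrightarrow> is_glb_in D le {j, cmp y} m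
        \<longrightarrow> is_lub_in D le {m, y} k \<longrightarrow> k = j)"

definition complete_lattice_poset :: "'a::order itself \<Rightarrow> bool" where
  "complete_lattice_poset _ \<longleftrightarrow> (\<forall>M :: 'a set. \<exists>j. is_lub_in UNIV (\<le>) M j)"

definition DM_carrier :: "'a::order set set" where
  "DM_carrier = {B. LB (UB B) = B}"

definition DM_compl :: "('a::order \<Rightarrow> 'a) \<Rightarrow> 'a set \<Rightarrow> 'a set" where
  "DM_compl cmp X = LB (cmp ` X)"

end

theory Submission
  imports Defs
begin

lemma Gal1: "N \<subseteq> LB (UB N)" by (auto simp: LB_def UB_def)
lemma Gal2: "N \<subseteq> UB (LB N)" by (auto simp: LB_def UB_def)
lemma UB_anti: "N \<subseteq> N' \<Longrightarrow> UB N' \<subseteq> UB N" by (auto simp: UB_def)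
lemma LB_anti: "N \<subseteq> N' \<Longrightarrow> LB N' \<subseteq> LB N" by (auto simp: LB_def)
lemma LUL: "LB (UB (LB N)) = LB N"
  by (meson Gal1 Gal2 LB_anti subset_antisym)
lemma ULU: "UB (LB (UB N)) = UB N"
  by (meson Gal1 Gal2 UB_anti subset_antisym)
lemma LB_UB_ins: "LB (UB {a} \<union> N) = LB (insert a N)"
  by (auto simp: LB_def UB_def intro: order_trans)
lemma UB_LB_ins: "UB (LB {a} \<union> N) = UB (insert a N)"
  by (auto simp: LB_def UB_def intro: order_trans)
lemma LB_single_sub: "LB {a} \<subseteq> LB {b} \<longleftrightarrow> (a::'a::order) \<le> b"
  by (auto simp: LB_def intro: order_trans)
lemma LB_single_eq: "LB {a} = LB {b} \<Longrightarrow> (a::'a::order) = b"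
  by (metis LB_single_sub order_antisym order_refl)
lemma LB_in_DM: "LB N \<in> DM_carrier" by (simp add: DM_carrier_def LUL)
lemma lub_UB: "is_lub_in UNIV (\<le>) M j \<Longrightarrow> UB M = UB {j}"
  by (auto simp: is_lub_in_def UB_def intro: order_trans)
lemma glb_LB: "is_glb_in UNIV (\<le>) M j \<Longrightarrow> LB M = LB {j}"
  by (auto simp: is_glb_in_def LB_def intro: order_trans)


lemma LB_UB_single: "LB (UB {a}) = LB {a}"
  using LB_UB_ins[of a "{}"] by simp
lemma DM_inter: "X \<in> DM_carrier \<Longrightarrow> Y \<in> DM_carrier \<Longrightarrow> X \<inter> Y \<in> DM_carrier"
  unfolding DM_carrier_def
proof (clarify)
  assume X: "LB (UB X) = X" and Y: "LB (UB Y) = Y"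
  have "LB (UB (X \<inter> Y)) \<subseteq> LB (UB X)" by (intro LB_anti UB_anti) auto
  moreover have "LB (UB (X \<inter> Y)) \<subseteq> LB (UB Y)" by (intro LB_anti UB_anti) auto
  ultimately show "LB (UB (X \<inter> Y)) = X \<inter> Y" using X Y Gal1[of "X \<inter> Y"] by auto
qed
lemma DM_lub: "X \<in> DM_carrier \<Longrightarrow> Y \<in> DM_carrier \<Longrightarrow>
   is_lub_in DM_carrier (\<subseteq>) {X, Y} (LB (UB (X \<union> Y)))"
  unfolding is_lub_in_def
proof (intro conjI ballI impI)
  show "LB (UB (X \<union> Y)) \<in> DM_carrier" by (rule LB_in_DM)
  show "\<And>W. W \<in> {X, Y} \<Longrightarrow> W \<subseteq> LB (UB (X \<union> Y))" using Gal1[of "X \<union> Y"] by auto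
  fix U assume "U \<in> DM_carrier" "\<forall>W\<in>{X, Y}. W \<subseteq> U"
  then have "X \<union> Y \<subseteq> U" "LB (UB U) = U" by (auto simp: DM_carrier_def)
  then show "LB (UB (X \<union> Y)) \<subseteq> U" by (metis LB_anti UB_anti)
qed
lemma DM_glb: "X \<in> DM_carrier \<Longrightarrow> Y \<in> DM_carrier \<Longrightarrow>
   is_glb_in DM_carrier (\<subseteq>) {X, Y} (X \<inter> Y)"
  unfolding is_glb_in_def using DM_inter by auto
lemma lub_unique: "is_lub_in D (\<subseteq>) M j \<Longrightarrow> is_lub_in D (\<subseteq>) M j' \<Longrightarrow> j = j'"
  unfolding is_lub_in_def by blast

locale pwc =
  fixes c :: "'a::order \<Rightarrow> 'a" and z :: 'a and t :: 'a
  assumes pwc: "poset_with_complementation c z t"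
begin

lemma bot: "z \<le> x" and top: "x \<le> t" and anti: "x \<le> y \<Longrightarrow> c y \<le> c x"
  and inv[simp]: "c (c x) = x" and lb0: "LB {x, c x} = {z}"
  using pwc unfolding poset_with_complementation_def by auto

lemma le_c_iff[simp]: "c x \<le> c y \<longleftrightarrow> y \<le> x"
  by (metis anti inv)
lemma swap1: "c x \<le> y \<longleftrightarrow> c y \<le> x" by (metis le_c_iff inv)
lemma swap2: "x \<le> c y \<longleftrightarrow> y \<le> c x" by (metis le_c_iff inv)
lemma c_inj[simp]: "c x = c y \<longleftrightarrow> x = y" by (metis inv)
lemma c_z[simp]: "c z = t" by (metis antisym bot top swap2)
lemma c_t[simp]: "c t = z" by (metis c_z inv)
lemma cc_img[simp]: "c ` c ` M = M" by (force simp: image_image)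

lemma c_UB: "c ` UB M = LB (c ` M)"
proof -
  have "l \<in> LB (c ` M) \<longleftrightarrow> c l \<in> UB M" for l
    by (auto simp: LB_def UB_def swap2)
  then show ?thesis by (auto simp: image_iff) (metis inv)
qed
lemma c_LB: "c ` LB M = UB (c ` M)"
proof -
  have "l \<in> UB (c ` M) \<longleftrightarrow> c l \<in> LB M" for l
    by (auto simp: LB_def UB_def swap1)
  then show ?thesis by (auto simp: image_iff) (metis inv)
qed

lemma lub_glb: "is_lub_in UNIV (\<le>) M j \<Longrightarrow> is_glb_in UNIV (\<le>) (c ` M) (c j)"
  unfolding is_lub_in_def is_glb_in_def
  by (metis (no_types, lifting) UNIV_I image_iff le_c_iff swap2)
lemma glb_lub: "is_glb_in UNIV (\<le>) M j \<Longrightarrow> is_lub_in UNIV (\<le>) (c ` M) (c j)"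
  unfolding is_lub_in_def is_glb_in_def
  by (metis (no_types, lifting) UNIV_I image_iff le_c_iff swap1)

lemma atom_not_both: "is_atom z a \<Longrightarrow> a \<le> s \<Longrightarrow> a \<le> c s \<Longrightarrow> False"
  using lb0[of s] unfolding is_atom_def LB_def by auto

lemma exists_max:
  assumes oc: "orthocomplete c" and at: "atomic z"
  shows "\<exists>s\<in>LB M. \<forall>w\<in>LB M. w \<le> c s \<longrightarrow> w = z"
proof -
  define A where "A = {S. S \<subseteq> {a. is_atom z a} \<inter> LB M \<and> orthogonal_set c S}"
  have "\<forall>C\<in>chains A. \<Union>C \<in> A"
  proof
    fix C assume C: "C \<in> chains A"
    show "\<Union>C \<in> A" unfolding A_def orthogonal_set_def
    proof (intro CollectI conjI ballI impI)
      show "\<Union>C \<subseteq> {a. is_atom z a} \<inter> LB M" using C by (auto simp: chains_def A_def)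
    next
      fix p q assume "p \<in> \<Union>C" "q \<in> \<Union>C" "p \<noteq> q"
      then obtain P Q where PQ: "P \<in> C" "Q \<in> C" "p \<in> P" "q \<in> Q" by auto
      then have "P \<subseteq> Q \<or> Q \<subseteq> P" using C by (auto simp: chains_def chain_subset_def)
      moreover have "P \<in> A" "Q \<in> A" using PQ C by (auto simp: chains_def)
      ultimately show "p \<le> c q" using PQ \<open>p \<noteq> q\<close>
        unfolding A_def orthogonal_set_def by blast
    qed
  qed
  then obtain S where SA: "S \<in> A" and Smax: "\<forall>X\<in>A. S \<subseteq> X \<longrightarrow> X = S"
    using Zorn_Lemma by blast
  have Sorth: "orthogonal_set c S" using SA by (auto simp: A_def)
  obtain s where s: "is_lub_in UNIV (\<le>) S s" using oc Sorth unfolding orthocomplete_def by blast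
  have SM: "S \<subseteq> LB M" and Sat: "\<And>a. a \<in> S \<Longrightarrow> is_atom z a" using SA by (auto simp: A_def)
  have sLB: "s \<in> LB M"
    unfolding LB_def
  proof (intro CollectI ballI)
    fix m assume "m \<in> M"
    then have "\<forall>x\<in>S. x \<le> m" using SM by (auto simp: LB_def)
    then show "s \<le> m" using s by (auto simp: is_lub_in_def)
  qed
  have "\<forall>w\<in>LB M. w \<le> c s \<longrightarrow> w = z"
  proof (intro ballI impI)
    fix w assume w: "w \<in> LB M" "w \<le> c s"
    show "w = z"
    proof (rule ccontr)
      assume "w \<noteq> z"
      then have "z < w" using bot[of w] by auto
      then obtain a where a: "is_atom z a" "a \<le> w" using at unfolding atomic_def by blast
      have aM: "a \<in> LB M" using a(2) w(1) by (auto simp: LB_def intro: order_trans)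
      have acs: "a \<le> c s" using a(2) w(2) by simp
      have aS: "a \<notin> S"
      proof
        assume "a \<in> S" then have "a \<le> s" using s by (auto simp: is_lub_in_def)
        then show False using atom_not_both[OF a(1) _ acs] by simp
      qed
      have "insert a S \<in> A"
        unfolding A_def orthogonal_set_def
      proof (intro CollectI conjI ballI impI)
        show "insert a S \<subseteq> {a. is_atom z a} \<inter> LB M" using a(1) aM SM Sat by auto
      next
        fix p q assume pq: "p \<in> insert a S" "q \<in> insert a S" "p \<noteq> q"
        have sub: "\<And>r. r \<in> S \<Longrightarrow> a \<le> c r"
        proof -
          fix r assume "r \<in> S"
          then have "r \<le> s" using s by (auto simp: is_lub_in_def)
          then show "a \<le> c r" using acs by (meson le_c_iff order_trans)
        qed
        show "p \<le> c q"
        proof (cases "p = a")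
          case True then show ?thesis using pq sub by auto
        next
          case False
          then have "p \<in> S" using pq by auto
          show ?thesis
          proof (cases "q = a")
            case True then show ?thesis using sub[OF \<open>p \<in> S\<close>] by (simp add: swap2)
          next
            case False then show ?thesis using pq \<open>p \<in> S\<close> Sorth
              by (auto simp: orthogonal_set_def)
          qed
        qed
      qed
      then have "insert a S = S" using Smax by blast
      then show False using aS by blast
    qed
  qed
  then show ?thesis using sLB by blast
qed


lemma po_law:
  assumes po: "pseudo_orthomodular c"
  shows "orthomodular_lattice_on UNIV (\<le>) c"
  unfolding orthomodular_lattice_on_def
proof (intro ballI allI impI)
  fix x y j m k
  assume j: "is_lub_in UNIV (\<le>) {x, y} j" and m: "is_glb_in UNIV (\<le>) {j, c y} m"
    and k: "is_lub_in UNIV (\<le>) {m, y} k"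
  have e: "LB (UB (LB {c x, c y} \<union> {c (c y)}) \<union> {c y}) = LB {c x, c y}"
    using po unfolding pseudo_orthomodular_def by blast
  have 1: "LB {c x, c y} = LB {c j}" using glb_LB[OF lub_glb[OF j]] by simp
  have 2: "UB {c j, y} = UB {c m}" using lub_UB[OF glb_lub[OF m]] by simp
  have 3: "LB {c m, c y} = LB {c k}" using glb_LB[OF lub_glb[OF k]] by simp
  have "LB (UB (LB {c x, c y} \<union> {c (c y)}) \<union> {c y}) = LB {c k}"
    unfolding 1 inv UB_LB_ins 2 LB_UB_ins 3[symmetric] by simp
  then have "LB {c k} = LB {c j}" using e 1 by simp
  then have "c k = c j" by (rule LB_single_eq)
  then show "k = j" by simp
qed

lemma meet_exists:
  fixes x y :: 'a
  assumes po: "pseudo_orthomodular c" and oj: "\<forall>x y. x \<le> c y \<longrightarrow> (\<exists>j. is_join x y j)"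
    and oc: "orthocomplete c" and at: "atomic z"
  shows "\<exists>s. is_glb_in UNIV (\<le>) {x, y} s"
proof -
  define W where "W = LB {x, y}"
  obtain s where sW: "s \<in> W" and smax: "\<forall>w\<in>W. w \<le> c s \<longrightarrow> w = z"
    using exists_max[OF oc at] W_def by blast
  have sy: "s \<le> y" using sW by (auto simp: W_def LB_def)
  obtain v where v: "is_lub_in UNIV (\<le>) {s, c y} v"
    using oj sy unfolding is_join_def by (metis inv)
  have vs: "s \<le> v" and vy: "c y \<le> v" using v by (auto simp: is_lub_in_def)
  have pxy: "LB (UB (W \<union> {c y}) \<union> {y}) = W"
    using po unfolding pseudo_orthomodular_def W_def by blast
  have claim1: "LB {v, y} = LB {s}"
  proof -
    have e: "LB (UB (LB {s, y} \<union> {c y}) \<union> {y}) = LB {s, y}"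
      using po unfolding pseudo_orthomodular_def by blast
    have "LB {s, y} = LB {s}" using sy by (auto simp: LB_def intro: order_trans[OF _ sy])
    moreover have "UB (LB {s} \<union> {c y}) = UB {v}"
    proof -
      have "UB (LB {s} \<union> {c y}) = UB {s, c y}" by (rule UB_LB_ins)
      then show ?thesis using lub_UB[OF v] by simp
    qed
    moreover have "LB (UB {v} \<union> {y}) = LB {v, y}" by (rule LB_UB_ins)
    ultimately show ?thesis using e by simp
  qed
  have claim2: "\<forall>q\<in>W. q \<le> v"
  proof (rule ccontr)
    assume "\<not> (\<forall>q\<in>W. q \<le> v)"
    then obtain q where qW: "q \<in> W" and qv: "\<not> q \<le> v" by blast
    define u where "u = c v"
    have "\<exists>e. e \<noteq> z \<and> e \<le> u \<and> e \<in> LB (UB {v, q})"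
    proof (rule ccontr)
      assume H: "\<not> (\<exists>e. e \<noteq> z \<and> e \<le> u \<and> e \<in> LB (UB {v, q}))"
      have U1: "UB (LB {c q, u} \<union> {c u}) = {t}"
      proof
        show "{t} \<subseteq> UB (LB {c q, u} \<union> {c u})" using top by (auto simp: UB_def)
      next
        show "UB (LB {c q, u} \<union> {c u}) \<subseteq> {t}"
        proof
          fix f assume f: "f \<in> UB (LB {c q, u} \<union> {c u})"
          have "c f \<le> u" using f by (auto simp: UB_def u_def)
          moreover have "c f \<in> LB (UB {v, q})"
            unfolding LB_def
          proof (intro CollectI ballI)
            fix g assume g: "g \<in> UB {v, q}"
            then have "c g \<in> LB {c q, u}" by (auto simp: UB_def LB_def u_def)
            then have "c g \<le> f" using f by (auto simp: UB_def)
            then show "c f \<le> g" using swap1 by blast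
          qed
          ultimately have "c f = z" using H by blast
          then show "f \<in> {t}" by (metis c_z inv singletonI)
        qed
      qed
      have e: "LB (UB (LB {c q, u} \<union> {c u}) \<union> {u}) = LB {c q, u}"
        using po unfolding pseudo_orthomodular_def by blast
      have "LB ({t} \<union> {u}) = LB {u}" by (simp add: LB_def top)
      then have "LB {u} = LB {c q, u}" using e U1 by simp
      then have "u \<le> c q" by (auto simp: LB_def)
      then show False using qv unfolding u_def by simp
    qed
    then obtain e where e: "e \<noteq> z" "e \<le> u" "e \<in> LB (UB {v, q})" by blast
    have uy: "u \<le> y" using vy unfolding u_def using swap1 by blast
    have "e \<in> LB (UB (W \<union> {c y}) \<union> {y})"
      unfolding LB_def
    proof (intro CollectI ballI)
      fix g assume g: "g \<in> UB (W \<union> {c y}) \<union> {y}"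
      show "e \<le> g"
      proof (cases "g = y")
        case True then show ?thesis using e(2) uy by auto
      next
        case False
        then have g2: "g \<in> UB (W \<union> {c y})" using g by auto
        then have "s \<le> g" "c y \<le> g" "q \<le> g" using sW qW by (auto simp: UB_def)
        then have "v \<le> g" using v by (auto simp: is_lub_in_def)
        then have "g \<in> UB {v, q}" using \<open>q \<le> g\<close> by (auto simp: UB_def)
        then show ?thesis using e(3) by (auto simp: LB_def)
      qed
    qed
    then have "e \<in> W" using pxy by simp
    moreover have "e \<le> c s" using e(2) vs unfolding u_def by (meson le_c_iff order_trans)
    ultimately show False using smax e(1) by blast
  qed
  have "is_glb_in UNIV (\<le>) {x, y} s"
    unfolding is_glb_in_def
  proof (intro conjI ballI impI)
    show "s \<in> UNIV" by simp
    show "\<And>w. w \<in> {x, y} \<Longrightarrow> s \<le> w" using sW by (auto simp: W_def LB_def)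
    fix l assume "l \<in> UNIV" "\<forall>w\<in>{x, y}. l \<le> w"
    then have lW: "l \<in> W" by (auto simp: W_def LB_def)
    then have "l \<in> LB {v, y}" using claim2 by (auto simp: W_def LB_def)
    then show "l \<le> s" using claim1 by (auto simp: LB_def)
  qed
  then show ?thesis by blast
qed

lemma complete_from:
  fixes M :: "'a set"
  assumes meets: "\<forall>x y::'a. \<exists>s. is_glb_in UNIV (\<le>) {x, y} s"
    and law: "orthomodular_lattice_on UNIV (\<le>) c"
    and oc: "orthocomplete c" and at: "atomic z"
  shows "\<exists>j. is_lub_in UNIV (\<le>) M j"
proof -
  have joins: "\<exists>j. is_lub_in UNIV (\<le>) {x, y} j" for x y :: 'a
  proof -
    obtain m where "is_glb_in UNIV (\<le>) {c x, c y} m" using meets by blast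
    then have "is_lub_in UNIV (\<le>) (c ` {c x, c y}) (c m)" by (rule glb_lub)
    then show ?thesis by auto
  qed
  have glb: "\<exists>s. is_glb_in UNIV (\<le>) N s" for N :: "'a set"
  proof -
    obtain s where sN: "s \<in> LB N" and smax: "\<forall>w\<in>LB N. w \<le> c s \<longrightarrow> w = z"
      using exists_max[OF oc at] by blast
    have "q \<le> s" if qN: "q \<in> LB N" for q
    proof -
      obtain jj where jj: "is_lub_in UNIV (\<le>) {q, s} jj" using joins by blast
      obtain mm where mm: "is_glb_in UNIV (\<le>) {jj, c s} mm" using meets by blast
      have jjN: "jj \<in> LB N"
        unfolding LB_def
      proof (intro CollectI ballI)
        fix n assume "n \<in> N"
        then have "q \<le> n" "s \<le> n" using qN sN by (auto simp: LB_def)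
        then show "jj \<le> n" using jj by (auto simp: is_lub_in_def)
      qed
      have "mm \<le> jj" "mm \<le> c s" using mm by (auto simp: is_glb_in_def)
      then have "mm \<in> LB N" using jjN by (auto simp: LB_def intro: order_trans[OF \<open>mm \<le> jj\<close>])
      then have "mm = z" using smax \<open>mm \<le> c s\<close> by blast
      then have k: "is_lub_in UNIV (\<le>) {mm, s} s" using bot by (auto simp: is_lub_in_def)
      have "s = jj" using law jj mm k unfolding orthomodular_lattice_on_def by blast
      then show "q \<le> s" using jj by (auto simp: is_lub_in_def)
    qed
    then have "is_glb_in UNIV (\<le>) N s" using sN by (auto simp: is_glb_in_def LB_def)
    then show ?thesis by blast
  qed
  obtain g where "is_glb_in UNIV (\<le>) (c ` M) g" using glb by blast
  then have "is_lub_in UNIV (\<le>) (c ` c ` M) (c g)" by (rule glb_lub)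
  then show ?thesis by auto
qed


lemma DM_compl_eq: "DM_compl c X = c ` UB X"
  by (simp add: DM_compl_def c_UB)
lemma DM_compl_single: "DM_compl c (LB {y}) = LB {c y}"
  unfolding DM_compl_def c_LB by (simp add: LB_UB_single)
lemma UB_DM_compl: "X \<in> DM_carrier \<Longrightarrow> UB (DM_compl c X) = c ` X"
proof -
  assume "X \<in> DM_carrier"
  then have X: "LB (UB X) = X" by (simp add: DM_carrier_def)
  have "c ` X = c ` LB (UB X)" using X by simp
  also have "\<dots> = UB (c ` UB X)" by (rule c_LB)
  finally show ?thesis by (simp add: DM_compl_eq)
qed

lemma iii_i:
  assumes law: "orthomodular_lattice_on DM_carrier (\<subseteq>) (DM_compl c)"
  shows "pseudo_orthomodular c"
  unfolding pseudo_orthomodular_def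
proof (intro allI)
  fix x y :: 'a
  define A where "A = LB {x, y}"
  define A' where "A' = DM_compl c A"
  define Y where "Y = LB {y}"
  define Yc where "Yc = LB {c y}"
  have AD: "A \<in> DM_carrier" by (simp add: A_def LB_in_DM)
  have A'D: "A' \<in> DM_carrier" by (simp add: A'_def DM_compl_def LB_in_DM)
  have YD: "Y \<in> DM_carrier" by (simp add: Y_def LB_in_DM)
  have YcD: "Yc \<in> DM_carrier" by (simp add: Yc_def LB_in_DM)
  have A'eq: "A' = c ` UB A" by (simp add: A'_def DM_compl_eq)
  have "Yc \<subseteq> A'"
  proof
    fix w assume "w \<in> Yc"
    then have "w \<le> c y" by (simp add: Yc_def LB_def)
    have "\<forall>a\<in>A. w \<le> c a"
    proof
      fix a assume "a \<in> A"
      then have "a \<le> y" by (simp add: A_def LB_def)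
      then have "c y \<le> c a" by simp
      then show "w \<le> c a" using \<open>w \<le> c y\<close> by (rule order_trans[rotated])
    qed
    then show "w \<in> A'" by (simp add: A'_def DM_compl_def LB_def)
  qed
  then have lubJ: "is_lub_in DM_carrier (\<subseteq>) {A', Yc} A'"
    using A'D by (auto simp: is_lub_in_def)
  have cYc: "DM_compl c Yc = Y" by (simp add: Yc_def Y_def DM_compl_single)
  have glbM: "is_glb_in DM_carrier (\<subseteq>) {A', DM_compl c Yc} (A' \<inter> Y)"
    unfolding cYc by (rule DM_glb[OF A'D YD])
  define K where "K = LB (UB ((A' \<inter> Y) \<union> Yc))"
  have lubK: "is_lub_in DM_carrier (\<subseteq>) {A' \<inter> Y, Yc} K"
    unfolding K_def by (rule DM_lub[OF DM_inter[OF A'D YD] YcD])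
  have KA: "K = A'"
    using law[unfolded orthomodular_lattice_on_def, rule_format, OF A'D YcD lubJ glbM lubK] .
  have "UB K = UB ((A' \<inter> Y) \<union> Yc)" by (simp add: K_def ULU)
  moreover have "UB A' = c ` A" using UB_DM_compl[OF AD] by (simp add: A'_def)
  ultimately have cA: "c ` A = UB ((A' \<inter> Y) \<union> Yc)" using KA by simp
  show "LB (UB (LB {x, y} \<union> {c y}) \<union> {y}) = LB {x, y}"
  proof
    show "LB {x, y} \<subseteq> LB (UB (LB {x, y} \<union> {c y}) \<union> {y})"
      by (auto simp: LB_def UB_def)
  next
    show "LB (UB (LB {x, y} \<union> {c y}) \<union> {y}) \<subseteq> LB {x, y}"
    proof
      fix r assume r: "r \<in> LB (UB (LB {x, y} \<union> {c y}) \<union> {y})"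
      have ry: "r \<le> y" using r by (auto simp: LB_def)
      have "c r \<in> UB ((A' \<inter> Y) \<union> Yc)"
        unfolding UB_def
      proof (intro CollectI ballI)
        fix w assume w: "w \<in> (A' \<inter> Y) \<union> Yc"
        show "w \<le> c r"
        proof (cases "w \<in> Yc")
          case True
          then have "w \<le> c y" by (simp add: Yc_def LB_def)
          moreover have "c y \<le> c r" using ry by simp
          ultimately show ?thesis by (rule order_trans)
        next
          case False
          then have "w \<in> A'" "w \<le> y" using w by (auto simp: Y_def LB_def)
          then obtain g where g: "g \<in> UB A" "w = c g" using A'eq by auto
          have "c y \<le> g" using \<open>w \<le> y\<close> g(2) swap1 by blast
          then have "g \<in> UB (LB {x, y} \<union> {c y})" using g(1) by (auto simp: A_def UB_def)
          then have "r \<le> g" using r by (auto simp: LB_def)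
          then show ?thesis using g(2) by simp
        qed
      qed
      then have "c r \<in> c ` A" using cA by simp
      then have "r \<in> A" by (metis c_inj imageE)
      then show "r \<in> LB {x, y}" by (simp add: A_def)
    qed
  qed
qed

lemma ii_iii:
  assumes cl: "\<forall>M::'a set. \<exists>j. is_lub_in UNIV (\<le>) M j"
    and law: "orthomodular_lattice_on UNIV (\<le>) c"
  shows "orthomodular_lattice_on DM_carrier (\<subseteq>) (DM_compl c)"
proof -
  have princ: "\<exists>x. X = LB {x}" if "X \<in> DM_carrier" for X :: "'a set"
  proof -
    obtain j where j: "is_lub_in UNIV (\<le>) X j" using cl by blast
    have "X = LB (UB X)" using that by (simp add: DM_carrier_def)
    also have "\<dots> = LB {j}" using lub_UB[OF j] LB_UB_single by simp
    finally show ?thesis by blast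
  qed
  have tlub: "is_lub_in UNIV (\<le>) {x, y} j"
    if H: "is_lub_in DM_carrier (\<subseteq>) {LB {x}, LB {y}} (LB {j})" for x y j :: 'a
  proof -
    have "LB {x} \<subseteq> LB {j}" "LB {y} \<subseteq> LB {j}" using H by (simp_all add: is_lub_in_def)
    then have xy: "x \<le> j" "y \<le> j" by (simp_all only: LB_single_sub)
    have "j \<le> u" if "x \<le> u" "y \<le> u" for u
    proof -
      have "LB {x} \<subseteq> LB {u}" "LB {y} \<subseteq> LB {u}" using that by (simp_all only: LB_single_sub)
      then have "LB {j} \<subseteq> LB {u}" using H LB_in_DM[of "{u}"] unfolding is_lub_in_def by blast
      then show ?thesis by (simp only: LB_single_sub)
    qed
    then show ?thesis using xy unfolding is_lub_in_def by blast
  qed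
  have tglb: "is_glb_in UNIV (\<le>) {x, y} j"
    if H: "is_glb_in DM_carrier (\<subseteq>) {LB {x}, LB {y}} (LB {j})" for x y j :: 'a
  proof -
    have "LB {j} \<subseteq> LB {x}" "LB {j} \<subseteq> LB {y}" using H by (simp_all add: is_glb_in_def)
    then have xy: "j \<le> x" "j \<le> y" by (simp_all only: LB_single_sub)
    have "u \<le> j" if "u \<le> x" "u \<le> y" for u
    proof -
      have "LB {u} \<subseteq> LB {x}" "LB {u} \<subseteq> LB {y}" using that by (simp_all only: LB_single_sub)
      then have "LB {u} \<subseteq> LB {j}" using H LB_in_DM[of "{u}"] unfolding is_glb_in_def by blast
      then show ?thesis by (simp only: LB_single_sub)
    qed
    then show ?thesis using xy unfolding is_glb_in_def by blast
  qed
  show ?thesis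
    unfolding orthomodular_lattice_on_def
  proof (intro ballI allI impI)
    fix X Y J Mm K :: "'a set"
    assume XD: "X \<in> DM_carrier" and YD: "Y \<in> DM_carrier"
      and J: "is_lub_in DM_carrier (\<subseteq>) {X, Y} J"
      and Mm: "is_glb_in DM_carrier (\<subseteq>) {J, DM_compl c Y} Mm"
      and K: "is_lub_in DM_carrier (\<subseteq>) {Mm, Y} K"
    obtain x where x: "X = LB {x}" using princ XD by blast
    obtain y where y: "Y = LB {y}" using princ YD by blast
    have "J \<in> DM_carrier" using J unfolding is_lub_in_def by blast
    then obtain j where j: "J = LB {j}" using princ by blast
    have "Mm \<in> DM_carrier" using Mm unfolding is_glb_in_def by blast
    then obtain m where m: "Mm = LB {m}" using princ by blast
    have "K \<in> DM_carrier" using K unfolding is_lub_in_def by blast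
    then obtain k where k: "K = LB {k}" using princ by blast
    have 1: "is_lub_in UNIV (\<le>) {x, y} j" using J unfolding x y j by (rule tlub)
    have 2: "is_glb_in UNIV (\<le>) {j, c y} m"
      using Mm unfolding j y m DM_compl_single by (rule tglb)
    have 3: "is_lub_in UNIV (\<le>) {m, y} k" using K unfolding m y k by (rule tlub)
    have "k = j"
      using law[unfolded orthomodular_lattice_on_def, rule_format, OF UNIV_I UNIV_I 1 2 3] .
    then show "K = J" using j k by simp
  qed
qed

end


theorem theorem6:
  fixes cmp :: "'a::order \<Rightarrow> 'a" and bot0 top1 :: 'a
  assumes "orthomodular_poset cmp bot0 top1"
    and "orthocomplete cmp"
    and "atomic bot0"
  shows "(pseudo_orthomodular cmp
            \<longleftrightarrow> (complete_lattice_poset TYPE('a) \<and> orthomodular_lattice_on UNIV (\<le>) cmp))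
       \<and> ((complete_lattice_poset TYPE('a) \<and> orthomodular_lattice_on UNIV (\<le>) cmp)
            \<longleftrightarrow> orthomodular_lattice_on DM_carrier (\<subseteq>) (DM_compl cmp))"
proof -
  interpret pwc cmp bot0 top1
    using assms(1) by (unfold_locales) (simp add: orthomodular_poset_def)
  have oj: "\<forall>x y. x \<le> cmp y \<longrightarrow> (\<exists>j. is_join x y j)"
    using assms(1) by (simp add: orthomodular_poset_def)
  have i_ii: "complete_lattice_poset TYPE('a) \<and> orthomodular_lattice_on UNIV (\<le>) cmp"
    if po: "pseudo_orthomodular cmp"
  proof
    have law: "orthomodular_lattice_on UNIV (\<le>) cmp" using po_law[OF po] .
    have meets: "\<forall>x y::'a. \<exists>s. is_glb_in UNIV (\<le>) {x, y} s"
      using meet_exists[OF po oj assms(2) assms(3)] by blast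
    show "complete_lattice_poset TYPE('a)"
      unfolding complete_lattice_poset_def
      using complete_from[OF meets law assms(2) assms(3)] by blast
    show "orthomodular_lattice_on UNIV (\<le>) cmp" by (rule law)
  qed
  have ii_iii': "orthomodular_lattice_on DM_carrier (\<subseteq>) (DM_compl cmp)"
    if "complete_lattice_poset TYPE('a) \<and> orthomodular_lattice_on UNIV (\<le>) cmp"
    using ii_iii that unfolding complete_lattice_poset_def by blast
  show ?thesis using i_ii ii_iii' iii_i by blast
qed

end
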